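(* Let $\mathbf{k}$ be a field and let $\mathfrak{B}=\mathbf{k}\langle g,x\rangle$ be the free algebra on $g,x$, made into a bialgebra by $\Delta(g)=g\otimes g$, $\Delta(x)=x\otimes 1+g\otimes x$, $\varepsilon(g)=1$, $\varepsilon(x)=0$. For integers $k,l\ge 0$ let $C_{k,l}$ be the sum of all monomials in $g,x$ containing exactly $k$ letters $g$ and $l$ letters $x$ (so $C_{0,0}=1$), and set $C_{k,l}=0$ if $k<0$ or $l<0$. Then: (1) $C_{k,l}=g\,C_{k-1,l}+x\,C_{k,l-1}=C_{k-1,l}\,g+C_{k,l-1}\,x$; (2) $\Delta(x^n)=\sum_{k\ge0}C_{k,n-k}\otimes x^k$ for all $n\ge0$; (3) $\Delta(C_{p,q})=\sum_{k\ge0}C_{p+k,q-k}\otimes C_{p,k}$. *)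

theory Defs
  imports Main "HOL-Library.Poly_Mapping" "HOL-Library.Product_Plus"
begin

text \<open>Words form a (non-commutative) monoid under concatenation, written additively so
  that the monoid ring construction of Poly_Mapping applies.\<close>

datatype letter = Lg | Lx

datatype word = Word "letter list"

instantiation word :: monoid_add
begin
definition zero_word :: word where "zero_word = Word []"
fun plus_word :: "word \<Rightarrow> word \<Rightarrow> word" where
  "plus_word (Word u) (Word v) = Word (u @ v)"
instance
proof
  fix a b c :: word
  show "a + b + c = a + (b + c)" by (cases a; cases b; cases c) simp
  show "0 + a = a" by (cases a) (simp add: zero_word_def)
  show "a + 0 = a" by (cases a) (simp add: zero_word_def)
qed
end

text \<open>The free algebra k<g,x>: finitely supported k-linear combinations of words,
  with multiplication the convolution (monoid algebra of the free monoid).\<close>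
type_synonym 'k fa = "word \<Rightarrow>\<^sub>0 'k"

text \<open>B \<otimes> B: the tensor product of two copies of the free algebra, with basis the
  pairs of words (u,v) standing for u \<otimes> v, and componentwise multiplication.\<close>
type_synonym 'k fa2 = "(word \<times> word) \<Rightarrow>\<^sub>0 'k"

definition gen_g :: "'k::semiring_1 fa" where "gen_g = Poly_Mapping.single (Word [Lg]) 1"
definition gen_x :: "'k::semiring_1 fa" where "gen_x = Poly_Mapping.single (Word [Lx]) 1"

definition tensor :: "'k::semiring_1 fa \<Rightarrow> 'k fa \<Rightarrow> 'k fa2" where
  "tensor a b = (\<Sum>u\<in>Poly_Mapping.keys a. \<Sum>v\<in>Poly_Mapping.keys b.
      Poly_Mapping.single (u, v) (Poly_Mapping.lookup a u * Poly_Mapping.lookup b v))"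

fun Delta_letter :: "letter \<Rightarrow> 'k::semiring_1 fa2" where
  "Delta_letter Lg = tensor gen_g gen_g"
| "Delta_letter Lx = tensor gen_x 1 + tensor gen_g gen_x"

fun Delta_word :: "word \<Rightarrow> 'k::semiring_1 fa2" where
  "Delta_word (Word w) = prod_list (map Delta_letter w)"

definition Delta :: "'k::semiring_1 fa \<Rightarrow> 'k fa2" where
  "Delta a = (\<Sum>w\<in>Poly_Mapping.keys a. Poly_Mapping.single (0, 0) (Poly_Mapping.lookup a w) * Delta_word w)"

definition count_g :: "letter list \<Rightarrow> nat" where
  "count_g w = length (filter (\<lambda>c. c = Lg) w)"

definition C :: "int \<Rightarrow> int \<Rightarrow> 'k::semiring_1 fa" where
  "C k l = (if k < 0 \<or> l < 0 then 0 else
      (\<Sum>w\<in>{w. length w = nat (k + l) \<and> count_g w = nat k}.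
         Poly_Mapping.single (Word w) 1))"

end

theory Submission
  imports Defs
begin

lemma sum_swap4: "(\<Sum>a\<in>A1. \<Sum>c\<in>C1. \<Sum>b\<in>B1. \<Sum>d\<in>D1. f a c b d) = (\<Sum>b\<in>B1. \<Sum>d\<in>D1. \<Sum>a\<in>A1. \<Sum>c\<in>C1. (f a c b d::'z::comm_monoid_add))"
proof -
  have "(\<Sum>a\<in>A1. \<Sum>c\<in>C1. \<Sum>b\<in>B1. \<Sum>d\<in>D1. f a c b d) = (\<Sum>a\<in>A1. \<Sum>b\<in>B1. \<Sum>c\<in>C1. \<Sum>d\<in>D1. f a c b d)"
    by (rule sum.cong[OF refl], rule sum.swap)
  also have "\<dots> = (\<Sum>b\<in>B1. \<Sum>a\<in>A1. \<Sum>c\<in>C1. \<Sum>d\<in>D1. f a c b d)" by (rule sum.swap)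
  also have "\<dots> = (\<Sum>b\<in>B1. \<Sum>a\<in>A1. \<Sum>d\<in>D1. \<Sum>c\<in>C1. f a c b d)"
    by (rule sum.cong[OF refl], rule sum.cong[OF refl], rule sum.swap)
  also have "\<dots> = (\<Sum>b\<in>B1. \<Sum>d\<in>D1. \<Sum>a\<in>A1. \<Sum>c\<in>C1. f a c b d)"
    by (rule sum.cong[OF refl], rule sum.swap)
  finally show ?thesis .
qed

lemma pm_repr:
  fixes p :: "'a \<Rightarrow>\<^sub>0 'b::comm_monoid_add"
  assumes "finite S" "Poly_Mapping.keys p \<subseteq> S"
  shows "p = (\<Sum>k\<in>S. Poly_Mapping.single k (Poly_Mapping.lookup p k))"
proof (rule poly_mapping_eqI)
  fix k'
  have "(\<Sum>k\<in>S. Poly_Mapping.lookup (Poly_Mapping.single k (Poly_Mapping.lookup p k)) k')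
      = (\<Sum>k\<in>S. if k = k' then Poly_Mapping.lookup p k else 0)"
    by (rule sum.cong) (auto simp: lookup_single)
  also have "\<dots> = Poly_Mapping.lookup p k'"
    using assms by (auto simp: sum.delta in_keys_iff)
  finally show "Poly_Mapping.lookup p k' = Poly_Mapping.lookup (\<Sum>k\<in>S. Poly_Mapping.single k (Poly_Mapping.lookup p k)) k'"
    by (simp add: lookup_sum)
qed

lemma single0_comm:
  fixes X :: "'a::monoid_add \<Rightarrow>\<^sub>0 'b::comm_semiring_1"
  shows "Poly_Mapping.single 0 c * X = X * Poly_Mapping.single 0 c"
proof -
  have X: "X = (\<Sum>k\<in>Poly_Mapping.keys X. Poly_Mapping.single k (Poly_Mapping.lookup X k))"
    by (rule pm_repr) auto
  have "Poly_Mapping.single 0 c * (\<Sum>k\<in>Poly_Mapping.keys X. Poly_Mapping.single k (Poly_Mapping.lookup X k))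
    = (\<Sum>k\<in>Poly_Mapping.keys X. Poly_Mapping.single k (Poly_Mapping.lookup X k)) * Poly_Mapping.single 0 c"
    by (simp add: sum_distrib_left sum_distrib_right mult_single mult.commute)
  with X show ?thesis by simp
qed

lemma tensor_gen:
  fixes a b :: "'k::comm_semiring_1 fa"
  assumes "finite S" "Poly_Mapping.keys a \<subseteq> S" "finite T" "Poly_Mapping.keys b \<subseteq> T"
  shows "tensor a b = (\<Sum>u\<in>S. \<Sum>v\<in>T.
      Poly_Mapping.single (u, v) (Poly_Mapping.lookup a u * Poly_Mapping.lookup b v))"
proof -
  have "tensor a b = (\<Sum>u\<in>S. \<Sum>v\<in>Poly_Mapping.keys b.
      Poly_Mapping.single (u, v) (Poly_Mapping.lookup a u * Poly_Mapping.lookup b v))"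
    unfolding tensor_def using assms
    by (intro sum.mono_neutral_left) (auto simp: in_keys_iff)
  also have "\<dots> = (\<Sum>u\<in>S. \<Sum>v\<in>T.
      Poly_Mapping.single (u, v) (Poly_Mapping.lookup a u * Poly_Mapping.lookup b v))"
    using assms by (intro sum.cong refl sum.mono_neutral_left) (auto simp: in_keys_iff)
  finally show ?thesis .
qed

lemma tensor_add_left: "tensor (a + b :: 'k::comm_semiring_1 fa) c = tensor a c + tensor b c"
proof -
  let ?S = "Poly_Mapping.keys a \<union> Poly_Mapping.keys b \<union> Poly_Mapping.keys (a+b)"
  show ?thesis
    by (subst (1 2 3) tensor_gen[where S = ?S and T = "Poly_Mapping.keys c"])
       (auto simp: lookup_add distrib_right single_add sum.distrib)
qed

lemma tensor_add_right: "tensor (a :: 'k::comm_semiring_1 fa) (b + c) = tensor a b + tensor a c"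
proof -
  let ?S = "Poly_Mapping.keys b \<union> Poly_Mapping.keys c \<union> Poly_Mapping.keys (b+c)"
  show ?thesis
    by (subst (1 2 3) tensor_gen[where T = ?S and S = "Poly_Mapping.keys a"])
       (auto simp: lookup_add distrib_left single_add sum.distrib)
qed

lemma tensor_zero_left[simp]: "tensor (0 :: 'k::comm_semiring_1 fa) b = 0"
  by (simp add: tensor_def)
lemma tensor_zero_right[simp]: "tensor (a :: 'k::comm_semiring_1 fa) 0 = 0"
  by (simp add: tensor_def)

lemma tensor_sum_left: "finite I \<Longrightarrow> tensor (\<Sum>i\<in>I. f i :: 'k::comm_semiring_1 fa) b = (\<Sum>i\<in>I. tensor (f i) b)"
  by (induction I rule: finite_induct) (auto simp: tensor_add_left)
lemma tensor_sum_right: "finite I \<Longrightarrow> tensor (a :: 'k::comm_semiring_1 fa) (\<Sum>i\<in>I. f i) = (\<Sum>i\<in>I. tensor a (f i))"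
  by (induction I rule: finite_induct) (auto simp: tensor_add_right)

lemma tensor_single: "tensor (Poly_Mapping.single u c :: 'k::comm_semiring_1 fa) (Poly_Mapping.single v d)
   = Poly_Mapping.single (u, v) (c * d)"
  by (subst tensor_gen[where S = "{u}" and T = "{v}"]) auto

lemma tensor_mult: "tensor (a :: 'k::comm_semiring_1 fa) b * tensor c d = tensor (a * c) (b * d)"
proof -
  let ?l = "\<lambda>p k. Poly_Mapping.lookup p k"
  have a: "a = (\<Sum>u\<in>Poly_Mapping.keys a. Poly_Mapping.single u (?l a u))" by (rule pm_repr) auto
  have b: "b = (\<Sum>u\<in>Poly_Mapping.keys b. Poly_Mapping.single u (?l b u))" by (rule pm_repr) auto
  have c: "c = (\<Sum>u\<in>Poly_Mapping.keys c. Poly_Mapping.single u (?l c u))" by (rule pm_repr) auto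
  have d: "d = (\<Sum>u\<in>Poly_Mapping.keys d. Poly_Mapping.single u (?l d u))" by (rule pm_repr) auto
  have "tensor a b * tensor c d = (\<Sum>u\<in>Poly_Mapping.keys a. \<Sum>u'\<in>Poly_Mapping.keys c. \<Sum>v\<in>Poly_Mapping.keys b. \<Sum>v'\<in>Poly_Mapping.keys d.
      Poly_Mapping.single (u + u', v + v') (?l a u * ?l b v * (?l c u' * ?l d v')))"
    unfolding tensor_def by (simp add: sum_product mult_single)
  also have "\<dots> = (\<Sum>u\<in>Poly_Mapping.keys a. \<Sum>u'\<in>Poly_Mapping.keys c. \<Sum>v\<in>Poly_Mapping.keys b. \<Sum>v'\<in>Poly_Mapping.keys d.
      Poly_Mapping.single (u + u', v + v') (?l a u * ?l c u' * (?l b v * ?l d v')))"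
    by (simp add: ac_simps)
  also have "\<dots> = tensor (a * c) (b * d)"
  proof -
    have ac: "a * c = (\<Sum>u\<in>Poly_Mapping.keys a. \<Sum>u'\<in>Poly_Mapping.keys c. Poly_Mapping.single (u + u') (?l a u * ?l c u'))"
    proof -
      have "a * c = (\<Sum>u\<in>Poly_Mapping.keys a. Poly_Mapping.single u (?l a u)) * (\<Sum>u\<in>Poly_Mapping.keys c. Poly_Mapping.single u (?l c u))"
        using a c by simp
      then show ?thesis by (simp add: sum_product mult_single)
    qed
    have bd: "b * d = (\<Sum>u\<in>Poly_Mapping.keys b. \<Sum>u'\<in>Poly_Mapping.keys d. Poly_Mapping.single (u + u') (?l b u * ?l d u'))"
    proof -
      have "b * d = (\<Sum>u\<in>Poly_Mapping.keys b. Poly_Mapping.single u (?l b u)) * (\<Sum>u\<in>Poly_Mapping.keys d. Poly_Mapping.single u (?l d u))"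
        using b d by simp
      then show ?thesis by (simp add: sum_product mult_single)
    qed
    show ?thesis unfolding ac bd
      apply (simp add: tensor_sum_left tensor_sum_right tensor_single)
      by (rule sum_swap4)
  qed
  finally show ?thesis .
qed

lemma tensor_one: "tensor (1 :: 'k::comm_semiring_1 fa) 1 = 1"
  by (metis single_one tensor_single mult_1 zero_prod_def)


lemma Delta_gen:
  fixes a :: "'k::comm_semiring_1 fa"
  assumes "finite S" "Poly_Mapping.keys a \<subseteq> S"
  shows "Delta a = (\<Sum>w\<in>S. Poly_Mapping.single (0, 0) (Poly_Mapping.lookup a w) * Delta_word w)"
  unfolding Delta_def using assms
  by (intro sum.mono_neutral_left) (auto simp: in_keys_iff)

lemma Delta_add: "Delta (a + b :: 'k::comm_semiring_1 fa) = Delta a + Delta b"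
proof -
  let ?S = "Poly_Mapping.keys a \<union> Poly_Mapping.keys b \<union> Poly_Mapping.keys (a+b)"
  show ?thesis
    by (subst (1 2 3) Delta_gen[where S = ?S])
       (auto simp: lookup_add distrib_right single_add sum.distrib)
qed

lemma Delta_zero[simp]: "Delta (0 :: 'k::comm_semiring_1 fa) = 0"
  by (simp add: Delta_def)

lemma Delta_sum: "finite I \<Longrightarrow> Delta (\<Sum>i\<in>I. f i :: 'k::comm_semiring_1 fa) = (\<Sum>i\<in>I. Delta (f i))"
  by (induction I rule: finite_induct) (auto simp: Delta_add)

lemma Delta_single: "Delta (Poly_Mapping.single w c :: 'k::comm_semiring_1 fa) = Poly_Mapping.single (0,0) c * Delta_word w"
  by (subst Delta_gen[where S = "{w}"]) auto

lemma Delta_word_add: "(Delta_word (u + v) :: 'k::comm_semiring_1 fa2) = Delta_word u * Delta_word v"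
  by (cases u; cases v) simp

lemma single00_mult: "Poly_Mapping.single (0::word, 0::word) (x * y) = (Poly_Mapping.single (0, 0) x * Poly_Mapping.single (0, 0) y :: 'k::comm_semiring_1 fa2)"
  by (simp add: mult_single)

lemma Delta_mult: "Delta (a * b :: 'k::comm_semiring_1 fa) = Delta a * Delta b"
proof -
  let ?l = "\<lambda>p k. Poly_Mapping.lookup p k"
  let ?s = "\<lambda>c. Poly_Mapping.single (0::word, 0::word) c :: 'k fa2"
  have a: "a = (\<Sum>u\<in>Poly_Mapping.keys a. Poly_Mapping.single u (?l a u))" by (rule pm_repr) auto
  have b: "b = (\<Sum>u\<in>Poly_Mapping.keys b. Poly_Mapping.single u (?l b u))" by (rule pm_repr) auto
  have ab: "a * b = (\<Sum>u\<in>Poly_Mapping.keys a. \<Sum>v\<in>Poly_Mapping.keys b. Poly_Mapping.single (u + v) (?l a u * ?l b v))"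
  proof -
    have "a * b = (\<Sum>u\<in>Poly_Mapping.keys a. Poly_Mapping.single u (?l a u)) * (\<Sum>u\<in>Poly_Mapping.keys b. Poly_Mapping.single u (?l b u))"
      using a b by simp
    then show ?thesis by (simp add: sum_product mult_single)
  qed
  have "Delta (a * b) = (\<Sum>u\<in>Poly_Mapping.keys a. \<Sum>v\<in>Poly_Mapping.keys b. ?s (?l a u) * ?s (?l b v) * (Delta_word u * Delta_word v))"
    unfolding ab by (simp add: Delta_sum Delta_single Delta_word_add single00_mult)
  also have "\<dots> = (\<Sum>u\<in>Poly_Mapping.keys a. \<Sum>v\<in>Poly_Mapping.keys b. (?s (?l a u) * Delta_word u) * (?s (?l b v) * Delta_word v))"
    by (intro sum.cong refl) (metis (no_types, lifting) mult.assoc single0_comm zero_prod_def)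
  also have "\<dots> = Delta a * Delta b"
    unfolding Delta_def by (simp add: sum_product)
  finally show ?thesis .
qed

lemma single_00_one: "(Poly_Mapping.single (Word [], Word []) 1 :: 'k::comm_semiring_1 fa2) = 1"
  by (metis single_one zero_prod_def zero_word_def)

lemma single_00_one': "(Poly_Mapping.single (0::word, 0::word) 1 :: 'k::comm_semiring_1 fa2) = 1"
  by (metis single_one zero_prod_def)

lemma Delta_one: "Delta (1 :: 'k::comm_semiring_1 fa) = 1"
proof -
  have "Delta (Poly_Mapping.single 0 1 :: 'k fa) = 1"
    by (simp add: Delta_single zero_word_def single_00_one)
  then show ?thesis by simp
qed

lemma Delta_g: "Delta (gen_g :: 'k::comm_semiring_1 fa) = tensor gen_g gen_g"
proof -
  have "Delta (Poly_Mapping.single (Word [Lg]) 1 :: 'k fa) = tensor gen_g gen_g"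
    by (simp add: Delta_single single_00_one single_00_one')
  then show ?thesis by (simp add: gen_g_def)
qed

lemma Delta_x: "Delta (gen_x :: 'k::comm_semiring_1 fa) = tensor gen_x 1 + tensor gen_g gen_x"
proof -
  have "Delta (Poly_Mapping.single (Word [Lx]) 1 :: 'k fa) = tensor gen_x 1 + tensor gen_g gen_x"
    by (simp add: Delta_single single_00_one single_00_one')
  then show ?thesis by (simp add: gen_x_def)
qed


abbreviation sw :: "letter list \<Rightarrow> 'k::comm_semiring_1 fa" where
  "sw w \<equiv> Poly_Mapping.single (Word w) 1"

lemma g_sw: "gen_g * sw w = sw (Lg # w)"
  by (simp add: gen_g_def mult_single)
lemma x_sw: "gen_x * sw w = sw (Lx # w)"
  by (simp add: gen_x_def mult_single)
lemma sw_g: "sw w * gen_g = sw (w @ [Lg])"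
  by (simp add: gen_g_def mult_single)
lemma sw_x: "sw w * gen_x = sw (w @ [Lx])"
  by (simp add: gen_x_def mult_single)

lemma letter_cases: "c = Lg \<or> c = Lx"
  by (cases c) auto

lemma split_left:
  assumes "finite A" "[] \<notin> A"
  shows "(\<Sum>w\<in>A. sw w :: 'k::comm_semiring_1 fa) =
    gen_g * (\<Sum>w\<in>{w. Lg # w \<in> A}. sw w) + gen_x * (\<Sum>w\<in>{w. Lx # w \<in> A}. sw w)"
proof -
  have A: "A = Cons Lg ` {w. Lg # w \<in> A} \<union> Cons Lx ` {w. Lx # w \<in> A}"
  proof (rule set_eqI, rule iffI)
    fix w assume "w \<in> A"
    with assms obtain c v where "w = c # v" by (cases w) auto
    with \<open>w \<in> A\<close> show "w \<in> Cons Lg ` {w. Lg # w \<in> A} \<union> Cons Lx ` {w. Lx # w \<in> A}"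
      using letter_cases[of c] by auto
  qed auto
  have f1: "finite {w. Lg # w \<in> A}" using assms(1) by (rule finite_vimageI[where h = "Cons Lg", unfolded vimage_def]) auto
  have f2: "finite {w. Lx # w \<in> A}" using assms(1) by (rule finite_vimageI[where h = "Cons Lx", unfolded vimage_def]) auto
  have "(\<Sum>w\<in>A. sw w :: 'k fa) = (\<Sum>w\<in>Cons Lg ` {w. Lg # w \<in> A}. sw w) + (\<Sum>w\<in>Cons Lx ` {w. Lx # w \<in> A}. sw w)"
    by (subst A, rule sum.union_disjoint) (use f1 f2 in auto)
  also have "\<dots> = gen_g * (\<Sum>w\<in>{w. Lg # w \<in> A}. sw w) + gen_x * (\<Sum>w\<in>{w. Lx # w \<in> A}. sw w)"
    by (simp add: sum.reindex sum_distrib_left g_sw x_sw)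
  finally show ?thesis .
qed

lemma split_right:
  assumes "finite A" "[] \<notin> A"
  shows "(\<Sum>w\<in>A. sw w :: 'k::comm_semiring_1 fa) =
    (\<Sum>w\<in>{w. w @ [Lg] \<in> A}. sw w) * gen_g + (\<Sum>w\<in>{w. w @ [Lx] \<in> A}. sw w) * gen_x"
proof -
  have A: "A = (\<lambda>w. w @ [Lg]) ` {w. w @ [Lg] \<in> A} \<union> (\<lambda>w. w @ [Lx]) ` {w. w @ [Lx] \<in> A}"
  proof (rule set_eqI, rule iffI)
    fix w assume "w \<in> A"
    with assms obtain c v where "w = v @ [c]" by (cases w rule: rev_cases) auto
    with \<open>w \<in> A\<close> show "w \<in> (\<lambda>w. w @ [Lg]) ` {w. w @ [Lg] \<in> A} \<union> (\<lambda>w. w @ [Lx]) ` {w. w @ [Lx] \<in> A}"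
      using letter_cases[of c] by auto
  qed auto
  have f1: "finite {w. w @ [Lg] \<in> A}" using assms(1) by (rule finite_vimageI[where h = "\<lambda>w. w @ [Lg]", unfolded vimage_def]) (auto simp: inj_on_def)
  have f2: "finite {w. w @ [Lx] \<in> A}" using assms(1) by (rule finite_vimageI[where h = "\<lambda>w. w @ [Lx]", unfolded vimage_def]) (auto simp: inj_on_def)
  have "(\<Sum>w\<in>A. sw w :: 'k fa) = (\<Sum>w\<in>(\<lambda>w. w @ [Lg]) ` {w. w @ [Lg] \<in> A}. sw w) + (\<Sum>w\<in>(\<lambda>w. w @ [Lx]) ` {w. w @ [Lx] \<in> A}. sw w)"
    by (subst A, rule sum.union_disjoint) (use f1 f2 in auto)
  also have "\<dots> = (\<Sum>w\<in>{w. w @ [Lg] \<in> A}. sw w) * gen_g + (\<Sum>w\<in>{w. w @ [Lx] \<in> A}. sw w) * gen_x"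
    by (simp add: sum.reindex sum_distrib_right sw_g sw_x inj_on_def)
  finally show ?thesis .
qed

definition W :: "nat \<Rightarrow> nat \<Rightarrow> letter list set" where
  "W n k = {w. length w = n \<and> count_g w = k}"

lemma finite_letter: "finite (UNIV :: letter set)"
proof -
  have "UNIV = {Lg, Lx}" using letter_cases by auto
  then show ?thesis by (metis finite.emptyI finite_insert)
qed

lemma finite_W: "finite (W n k)"
proof -
  have "W n k \<subseteq> {xs. set xs \<subseteq> UNIV \<and> length xs = n}" by (auto simp: W_def)
  then show ?thesis using finite_lists_length_eq[OF finite_letter] finite_subset by blast
qed

lemma C_W: "k \<ge> 0 \<Longrightarrow> l \<ge> 0 \<Longrightarrow> C k l = (\<Sum>w\<in>W (nat (k + l)) (nat k). sw w)"
  by (simp add: C_def W_def)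

lemma C_neg: "k < 0 \<or> l < 0 \<Longrightarrow> C k l = 0"
  by (simp add: C_def)

lemma C_00: "(C 0 0 :: 'k::comm_semiring_1 fa) = 1"
proof -
  have "W 0 0 = {[]}" by (auto simp: W_def count_g_def)
  moreover have "(C 0 0 :: 'k fa) = (\<Sum>w\<in>W (nat (0 + 0)) (nat 0). sw w)" by (rule C_W) auto
  ultimately show ?thesis by (simp add: zero_word_def[symmetric])
qed

lemma C_rec_left:
  assumes "(k, l) \<noteq> (0, 0)"
  shows "(C k l :: 'k::comm_semiring_1 fa) = gen_g * C (k - 1) l + gen_x * C k (l - 1)"
proof (cases "k < 0 \<or> l < 0")
  case True then show ?thesis by (auto simp: C_neg)
next
  case False
  then have kl: "k \<ge> 0" "l \<ge> 0" by auto
  have ne: "[] \<notin> W (nat (k + l)) (nat k)" using assms kl by (auto simp: W_def count_g_def)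
  have e1: "{w. Lg # w \<in> W (nat (k + l)) (nat k)} = (if k = 0 then {} else W (nat (k - 1 + l)) (nat (k - 1)))"
    using kl by (auto simp: W_def count_g_def)
  have e2: "{w. Lx # w \<in> W (nat (k + l)) (nat k)} = (if l = 0 then {} else W (nat (k + (l - 1))) (nat k))"
    using kl apply (auto simp: W_def count_g_def)
    by (metis Suc_n_not_le_n length_filter_le)
  show ?thesis
    using kl
    by (simp add: C_W split_left[OF finite_W ne] e1 e2 C_neg)
qed

lemma C_rec_right:
  assumes "(k, l) \<noteq> (0, 0)"
  shows "(C k l :: 'k::comm_semiring_1 fa) = C (k - 1) l * gen_g + C k (l - 1) * gen_x"
proof (cases "k < 0 \<or> l < 0")
  case True then show ?thesis by (auto simp: C_neg)
next
  case False
  then have kl: "k \<ge> 0" "l \<ge> 0" by auto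
  have ne: "[] \<notin> W (nat (k + l)) (nat k)" using assms kl by (auto simp: W_def count_g_def)
  have e1: "{w. w @ [Lg] \<in> W (nat (k + l)) (nat k)} = (if k = 0 then {} else W (nat (k - 1 + l)) (nat (k - 1)))"
    using kl by (auto simp: W_def count_g_def)
  have e2: "{w. w @ [Lx] \<in> W (nat (k + l)) (nat k)} = (if l = 0 then {} else W (nat (k + (l - 1))) (nat k))"
    using kl apply (auto simp: W_def count_g_def)
    by (metis Suc_n_not_le_n length_filter_le)
  show ?thesis
    using kl
    by (simp add: C_W split_right[OF finite_W ne] e1 e2 C_neg)
qed


lemma C_rec_right_all:
  "tensor (C (p + k - 1) q * gen_g) (C p k :: 'k::comm_semiring_1 fa) =
     tensor (C (p + k - 1) q * gen_g) (C (p - 1) k * gen_g) + tensor (C (p + k - 1) q * gen_g) (C p (k - 1) * gen_x)"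
proof (cases "(p, k) = (0, 0)")
  case True
  then have "C (p + k - 1) q = (0 :: 'k fa)" by (simp add: C_neg)
  then show ?thesis by simp
next
  case False
  then show ?thesis by (subst C_rec_right[OF False]) (simp add: tensor_add_right)
qed

lemma shift_sum:
  fixes h :: "int \<Rightarrow> 'a::comm_monoid_add"
  assumes "0 \<le> N" "h (-1) = 0" "h N = 0"
  shows "(\<Sum>k\<in>{0..N}. h (k - 1)) = (\<Sum>k\<in>{0..N}. h k)"
proof -
  have "(\<Sum>k\<in>{0..N}. h (k - 1)) = (\<Sum>j\<in>(\<lambda>k. k - 1) ` {0..N}. h j)"
    by (subst sum.reindex) (auto simp: inj_on_def)
  also have "(\<lambda>k. k - 1) ` {0..N} = insert (-1) {0..N-1}" using assms(1) by auto
  also have "(\<Sum>j\<in>insert (-1) {0..N-1}. h j) = (\<Sum>j\<in>{0..N-1}. h j)"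
    using assms by simp
  also have "\<dots> = (\<Sum>j\<in>insert N {0..N-1}. h j)" using assms by simp
  also have "insert N {0..N-1} = {0..N}" using assms(1) by auto
  finally show ?thesis .
qed

lemma Delta_C_gen:
  fixes p q N :: int
  assumes "q \<le> N"
  shows "Delta (C p q :: 'k::comm_semiring_1 fa) = (\<Sum>k\<in>{0..N}. tensor (C (p + k) (q - k)) (C p k))"
  using assms
proof (induction "nat (p + q)" arbitrary: p q N rule: less_induct)
  case less
  show ?case
  proof (cases "p < 0 \<or> q < 0")
    case True
    then show ?thesis by (auto simp: C_neg intro!: sum.neutral)
  next
    case False
    then have pq: "p \<ge> 0" "q \<ge> 0" by auto
    show ?thesis
    proof (cases "p = 0 \<and> q = 0")
      case True
      have "(\<Sum>k\<in>{0..N}. tensor (C (p + k) (q - k)) (C p k) :: 'k fa2) = (\<Sum>k\<in>{0}. tensor (C (p + k) (q - k)) (C p k))"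
        using True less.prems by (intro sum.mono_neutral_right) (auto simp: C_neg)
      then show ?thesis using True by (simp add: C_00 Delta_one tensor_one)
    next
      case False
      then have ne: "(p, q) \<noteq> (0, 0)" by auto
      have IH1: "Delta (C (p - 1) q :: 'k fa) = (\<Sum>k\<in>{0..N}. tensor (C (p - 1 + k) (q - k)) (C (p - 1) k))"
        using less.hyps[of "p - 1" q N] less.prems pq ne by auto
      have IH2: "Delta (C p (q - 1) :: 'k fa) = (\<Sum>k\<in>{0..N}. tensor (C (p + k) (q - 1 - k)) (C p k))"
        using less.hyps[of p "q - 1" N] less.prems pq ne by auto
      let ?G = "gen_g :: 'k fa" and ?X = "gen_x :: 'k fa"
      have "Delta (C p q :: 'k fa) = Delta (C (p - 1) q) * tensor ?G ?G + Delta (C p (q - 1)) * (tensor ?X 1 + tensor ?G ?X)"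
        by (subst C_rec_right[OF ne]) (simp add: Delta_add Delta_mult Delta_g Delta_x)
      also have "\<dots> = (\<Sum>k\<in>{0..N}. tensor (C (p + k - 1) (q - k) * ?G) (C (p - 1) k * ?G))
          + (\<Sum>k\<in>{0..N}. tensor (C (p + k) (q - k - 1) * ?X) (C p k))
          + (\<Sum>k\<in>{0..N}. tensor (C (p + k) (q - k - 1) * ?G) (C p k * ?X))"
        unfolding IH1 IH2 by (simp add: sum_distrib_right distrib_left tensor_mult sum.distrib algebra_simps)
      also have "(\<Sum>k\<in>{0..N}. tensor (C (p + k) (q - k - 1) * ?G) (C p k * ?X))
          = (\<Sum>k\<in>{0..N}. tensor (C (p + k - 1) (q - k) * ?G) (C p (k - 1) * ?X))"
      proof -
        define h where "h = (\<lambda>k. tensor (C (p + k) (q - k - 1) * ?G) (C p k * ?X))"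
        have "(\<Sum>k\<in>{0..N}. h (k - 1)) = (\<Sum>k\<in>{0..N}. h k)"
          using less.prems pq by (intro shift_sum) (auto simp: h_def C_neg)
        moreover have e: "\<And>k. p + (k - 1) = p + k - 1" "\<And>k. q - (k - 1) - 1 = q - k" by auto
        ultimately show ?thesis unfolding h_def e by simp
      qed
      also have "(\<Sum>k\<in>{0..N}. tensor (C (p + k - 1) (q - k) * ?G) (C (p - 1) k * ?G))
          + (\<Sum>k\<in>{0..N}. tensor (C (p + k) (q - k - 1) * ?X) (C p k))
          + (\<Sum>k\<in>{0..N}. tensor (C (p + k - 1) (q - k) * ?G) (C p (k - 1) * ?X))
          = (\<Sum>k\<in>{0..N}. tensor (C (p + k - 1) (q - k) * ?G) (C p k))
          + (\<Sum>k\<in>{0..N}. tensor (C (p + k) (q - k - 1) * ?X) (C p k))"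
      proof -
        have "(\<Sum>k\<in>{0..N}. tensor (C (p + k - 1) (q - k) * ?G) (C p k))
           = (\<Sum>k\<in>{0..N}. tensor (C (p + k - 1) (q - k) * ?G) (C (p - 1) k * ?G))
           + (\<Sum>k\<in>{0..N}. tensor (C (p + k - 1) (q - k) * ?G) (C p (k - 1) * ?X))"
          unfolding sum.distrib[symmetric]
          by (rule sum.cong[OF refl], rule C_rec_right_all)
        then show ?thesis by (simp add: algebra_simps)
      qed
      also have "\<dots> = (\<Sum>k\<in>{0..N}. tensor (C (p + k) (q - k)) (C p k))"
      proof -
        have "\<And>k. k \<in> {0..N} \<Longrightarrow> tensor (C (p + k) (q - k)) (C p k)
             = tensor (C (p + k - 1) (q - k) * ?G) (C p k) + tensor (C (p + k) (q - k - 1) * ?X) (C p k)"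
        proof -
          fix k assume "k \<in> {0..N}"
          then have "(p + k, q - k) \<noteq> (0, 0)" using ne pq by auto
          then show "tensor (C (p + k) (q - k)) (C p k)
             = tensor (C (p + k - 1) (q - k) * ?G) (C p k) + tensor (C (p + k) (q - k - 1) * ?X) (C p k)"
            by (subst C_rec_right) (auto simp: tensor_add_left)
        qed
        then show ?thesis by (simp add: sum.distrib)
      qed
      finally show ?thesis .
    qed
  qed
qed


lemma sum_nat_int: "(\<Sum>k\<in>{0..n}. f (int k)) = (\<Sum>k\<in>{0..int n}. (f k :: 'a::comm_monoid_add))"
proof -
  have "(\<Sum>k\<in>{0..int n}. f k) = (\<Sum>k\<in>int ` {0..n}. f k)" by (simp add: image_int_atLeastAtMost)
  also have "\<dots> = (\<Sum>k\<in>{0..n}. f (int k))" by (subst sum.reindex) auto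
  finally show ?thesis by simp
qed

lemma Delta_C_nat: "Delta (C (int p) (int q) :: 'k::comm_semiring_1 fa) =
            (\<Sum>k\<in>{0..q}. tensor (C (int p + int k) (int q - int k)) (C (int p) (int k)))"
  using Delta_C_gen[of "int q" "int q" "int p"]
  by (simp add: sum_nat_int[where f = "\<lambda>k. tensor (C (int p + k) (int q - k)) (C (int p) k)"])

lemma x_pow_C: "(gen_x :: 'k::comm_semiring_1 fa) ^ n = C 0 (int n)"
proof (induction n)
  case 0 then show ?case by (simp add: C_00)
next
  case (Suc n)
  have "(C 0 (int (Suc n)) :: 'k fa) = C (0 - 1) (int (Suc n)) * gen_g + C 0 (int (Suc n) - 1) * gen_x"
    by (rule C_rec_right) simp
  also have "\<dots> = C 0 (int n) * gen_x" by (simp add: C_neg)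
  finally have "(C 0 (int (Suc n)) :: 'k fa) = C 0 (int n) * gen_x" .
  then show ?case by (simp only: power_Suc2 Suc.IH)
qed

theorem lemma2p10:
  shows "(\<forall>k l. k \<ge> 0 \<and> l \<ge> 0 \<and> (k, l) \<noteq> (0, 0) \<longrightarrow>
            (C k l :: 'k::field fa) = gen_g * C (k - 1) l + gen_x * C k (l - 1) \<and>
            (C k l :: 'k fa) = C (k - 1) l * gen_g + C k (l - 1) * gen_x)
      \<and> (\<forall>n::nat. Delta ((gen_x :: 'k fa) ^ n) =
            (\<Sum>k\<in>{0..n}. tensor (C (int k) (int n - int k)) (gen_x ^ k)))
      \<and> (\<forall>p q :: nat. Delta (C (int p) (int q) :: 'k fa) =
            (\<Sum>k\<in>{0..q}. tensor (C (int p + int k) (int q - int k)) (C (int p) (int k))))"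
proof (intro conjI allI impI)
  fix k l :: int
  assume "0 \<le> k \<and> 0 \<le> l \<and> (k, l) \<noteq> (0, 0)"
  then have ne: "(k, l) \<noteq> (0, 0)" by simp
  show "(C k l :: 'k fa) = gen_g * C (k - 1) l + gen_x * C k (l - 1)" by (rule C_rec_left[OF ne])
  show "(C k l :: 'k fa) = C (k - 1) l * gen_g + C k (l - 1) * gen_x" by (rule C_rec_right[OF ne])
next
  fix n :: nat
  show "Delta ((gen_x :: 'k fa) ^ n) = (\<Sum>k\<in>{0..n}. tensor (C (int k) (int n - int k)) (gen_x ^ k))"
    unfolding x_pow_C using Delta_C_nat[of 0 n] by simp
next
  fix p q :: nat
  show "Delta (C (int p) (int q) :: 'k fa) =
            (\<Sum>k\<in>{0..q}. tensor (C (int p + int k) (int q - int k)) (C (int p) (int k)))"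
    by (rule Delta_C_nat)
qed

end
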